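(* Let $f\colon\{0,1\}^n\to\{0,1\}^n$ and $F(x,i)=f(x)_{1,\ldots,i-1}$ on $\{0,1\}^n\times[n]$. Let $A^*$ be the randomized algorithm that on input $(x,i)$ outputs a uniformly random $x'\in\{0,1\}^n$ with $f(x')_{1,\ldots,i-1}=f(x)_{1,\ldots,i-1}$. Consider the oracle algorithm $\mathrm{ExtendOne}^{C}(x,b,i)$: set $j:=0$; repeat { $x':=C(x,i)$ with fresh randomness; $j:=j+1$ } until $f(x')_i=b$; return $(x',j)$. Consider the oracle algorithm $\mathrm{Inv}^{C}(y)$ for $y\in\{0,1\}^n$: choose $x^{(0)}$ uniformly in $\{0,1\}^n$; for $i=1$ to $n$ let $(x^{(i)},j):=\mathrm{ExtendOne}^{C}(x^{(i-1)},y_i,i)$; return $x^{(n)}$. Then the expected number of calls to $A^*$ in a random execution of $\mathrm{Inv}^{A^*}(y)$ with $y=f(x)$ for $x$ uniform in $\{0,1\}^n$ is at most $2n$.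
   Context: $y_i$ denotes the $i$-th bit of $y$ and $y_{1,\ldots,i}$ its first $i$ bits. *)

theory Defs
  imports "HOL-Probability.Probability"
begin

text \<open>Bit strings of length n are bool lists of length n; bit k (1-based) of y is y ! (k-1),
  and the first k bits are take k y.\<close>

definition bitstrings :: "nat \<Rightarrow> bool list set" where
  "bitstrings n = {x. length x = n}"

definition A_star :: "nat \<Rightarrow> (bool list \<Rightarrow> bool list) \<Rightarrow> bool list \<Rightarrow> nat \<Rightarrow> bool list spmf" where
  "A_star n f x i = spmf_of_set {x' \<in> bitstrings n. take (i - 1) (f x') = take (i - 1) (f x)}"

text \<open>The repeat loop of ExtendOne^C(x,b,i), j = number of oracle calls so far.\<close>
partial_function (spmf) extend_loop ::
  "(bool list \<Rightarrow> bool list) \<Rightarrow> (bool list \<Rightarrow> nat \<Rightarrow> bool list spmf) \<Rightarrow> bool list \<Rightarrow> bool \<Rightarrow> nat \<Rightarrow> nat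
   \<Rightarrow> (bool list \<times> nat) spmf" where
  "extend_loop f C x b i j =
     bind_spmf (C x i) (\<lambda>x'. if f x' ! (i - 1) = b then return_spmf (x', Suc j)
                              else extend_loop f C x b i (Suc j))"

definition extend_one ::
  "(bool list \<Rightarrow> bool list) \<Rightarrow> (bool list \<Rightarrow> nat \<Rightarrow> bool list spmf) \<Rightarrow> bool list \<Rightarrow> bool \<Rightarrow> nat
   \<Rightarrow> (bool list \<times> nat) spmf" where
  "extend_one f C x b i = extend_loop f C x b i 0"

text \<open>First k iterations of Inv^C(y): returns (x^(k), total number of oracle calls so far).\<close>
primrec inv_iter ::
  "nat \<Rightarrow> (bool list \<Rightarrow> bool list) \<Rightarrow> (bool list \<Rightarrow> nat \<Rightarrow> bool list spmf) \<Rightarrow> bool list \<Rightarrow> nat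
   \<Rightarrow> (bool list \<times> nat) spmf" where
  "inv_iter n f C y 0 = map_spmf (\<lambda>x. (x, 0)) (spmf_of_set (bitstrings n))"
| "inv_iter n f C y (Suc k) =
     bind_spmf (inv_iter n f C y k) (\<lambda>(x, c).
       bind_spmf (extend_one f C x (y ! k) (Suc k)) (\<lambda>(x', j). return_spmf (x', c + j)))"

definition inv_alg ::
  "nat \<Rightarrow> (bool list \<Rightarrow> bool list) \<Rightarrow> (bool list \<Rightarrow> nat \<Rightarrow> bool list spmf) \<Rightarrow> bool list
   \<Rightarrow> (bool list \<times> nat) spmf" where
  "inv_alg n f C y = inv_iter n f C y n"

definition inv_experiment :: "nat \<Rightarrow> (bool list \<Rightarrow> bool list) \<Rightarrow> (bool list \<times> nat) spmf" where
  "inv_experiment n f = bind_spmf (spmf_of_set (bitstrings n)) (\<lambda>x. inv_alg n f (A_star n f) (f x))"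

end

theory Submission
  imports Defs
begin
lemma nn_bind: "(\<integral>\<^sup>+x. g x \<partial>measure_spmf (bind_spmf p h)) = (\<integral>\<^sup>+a. (\<integral>\<^sup>+x. g x \<partial>measure_spmf (h a)) \<partial>measure_spmf p)"
  by (simp add: measure_spmf_bind o_def nn_integral_bind[where B="count_space UNIV"] measurable_spmf_measure1)
lemma nn_return: "(\<integral>\<^sup>+x. g x \<partial>measure_spmf (return_spmf a)) = g a"
  by (simp add: measure_spmf_return_spmf nn_integral_return)

lemma loop_rec_nn:
  fixes L :: "nat \<Rightarrow> ('a \<times> nat) spmf"
  assumes rec: "\<And>j. L j = bind_spmf (spmf_of_set S) (\<lambda>x'. if P x' then return_spmf (x', Suc j) else L (Suc j))"
  and fin: "finite S"
  shows "(\<integral>\<^sup>+r. g r \<partial>measure_spmf (L j)) =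
     ((\<Sum>x'\<in>{x\<in>S. P x}. g (x', Suc j)) + of_nat (card {x\<in>S. \<not> P x}) * (\<integral>\<^sup>+r. g r \<partial>measure_spmf (L (Suc j)))) / of_nat (card S)"
proof -
  have "(\<integral>\<^sup>+r. g r \<partial>measure_spmf (L j)) = (\<Sum>x'\<in>S. (if P x' then g (x', Suc j) else (\<integral>\<^sup>+r. g r \<partial>measure_spmf (L (Suc j))))) / of_nat (card S)"
    unfolding arg_cong[OF rec[of j], of "\<lambda>p. \<integral>\<^sup>+r. g r \<partial>measure_spmf p"]
    by (simp add: nn_bind nn_integral_spmf_of_set) (intro arg_cong2[where f="(/)"] sum.cong refl, simp add: nn_return)
  also have "(\<Sum>x'\<in>S. (if P x' then g (x', Suc j) else (\<integral>\<^sup>+r. g r \<partial>measure_spmf (L (Suc j)))))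
     = (\<Sum>x'\<in>{x\<in>S. P x}. g (x', Suc j)) + of_nat (card {x\<in>S. \<not> P x}) * (\<integral>\<^sup>+r. g r \<partial>measure_spmf (L (Suc j)))"
    using fin by (simp add: sum.If_cases Int_def Collect_conj_eq[symmetric] Compl_eq)
  finally show ?thesis .
qed

lemma loop_rec_w:
  fixes L :: "nat \<Rightarrow> ('a \<times> nat) spmf"
  assumes rec: "\<And>j. L j = bind_spmf (spmf_of_set S) (\<lambda>x'. if P x' then return_spmf (x', Suc j) else L (Suc j))"
  and fin: "finite S"
  shows "weight_spmf (L j) = (real (card {x\<in>S. P x}) + real (card {x\<in>S. \<not> P x}) * weight_spmf (L (Suc j))) / real (card S)"
proof -
  have "weight_spmf (L j) = (\<Sum>x'\<in>S. (if P x' then 1 else weight_spmf (L (Suc j)))) / real (card S)"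
    unfolding arg_cong[OF rec[of j], of weight_spmf]
    by (simp add: weight_bind_spmf integral_spmf_of_set o_def if_distrib cong: if_cong)
  also have "(\<Sum>x'\<in>S. (if P x' then 1 else weight_spmf (L (Suc j)))) = real (card {x\<in>S. P x}) + real (card {x\<in>S. \<not> P x}) * weight_spmf (L (Suc j))"
    using fin by (simp add: sum.If_cases Int_def Collect_conj_eq[symmetric] Compl_eq)
  finally show ?thesis .
qed

lemma loop_props:
  fixes L :: "nat \<Rightarrow> ('a \<times> nat) spmf"
  assumes rec: "\<And>j. L j = bind_spmf (spmf_of_set S) (\<lambda>x'. if P x' then return_spmf (x', Suc j) else L (Suc j))"
  and fin: "finite S" and x0: "x0 \<in> S" "P x0"
  shows "lossless_spmf (L j) \<and> (\<forall>r\<in>set_spmf (L j). fst r \<in> S \<and> P (fst r)) \<and>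
     (\<integral>\<^sup>+r. ennreal (real (snd r)) \<partial>measure_spmf (L j)) \<le> ennreal (real j + real (card S) / real (card {x\<in>S. P x}))"
proof -
  define cG where "cG = real (card {x\<in>S. P x})"
  define cB where "cB = real (card {x\<in>S. \<not> P x})"
  define cS where "cS = real (card S)"
  have "card {x\<in>S. P x} + card {x\<in>S. \<not> P x} = card ({x\<in>S. P x} \<union> {x\<in>S. \<not> P x})"
    using fin by (intro card_Un_disjoint[symmetric]) auto
  also have "{x\<in>S. P x} \<union> {x\<in>S. \<not> P x} = S" by blast
  finally have cS: "cS = cG + cB" unfolding cS_def cG_def cB_def by (metis of_nat_add)
  have cGpos: "cG > 0" unfolding cG_def using x0 fin by (auto simp: card_gt_0_iff)
  have cSpos: "card S > 0" using fin x0 by (auto simp: card_gt_0_iff)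
  have cSpos': "cS > 0" using cSpos unfolding cS_def by simp
  have cBnn: "cB \<ge> 0" unfolding cB_def by simp
  have wrec: "\<And>j. weight_spmf (L j) = (cG + cB * weight_spmf (L (Suc j))) / cS"
    unfolding cG_def cB_def cS_def by (rule loop_rec_w[OF rec fin])
  define w where "w = (INF j. weight_spmf (L j))"
  have bdd: "bdd_below (range (\<lambda>j. weight_spmf (L j)))"
    by (rule bdd_belowI[where m=0]) auto
  have wle: "\<And>j. w \<le> weight_spmf (L j)" unfolding w_def using bdd by (auto intro: cINF_lower)
  have "\<And>j. (cG + cB * w) / cS \<le> weight_spmf (L j)"
  proof -
    fix j
    have "(cG + cB * w) / cS \<le> (cG + cB * weight_spmf (L (Suc j))) / cS"
      using cS cGpos cBnn wle[of "Suc j"]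
      by (intro divide_right_mono add_left_mono mult_left_mono) auto
    then show "(cG + cB * w) / cS \<le> weight_spmf (L j)" using wrec[of j] by simp
  qed
  then have "(cG + cB * w) / cS \<le> w" unfolding w_def by (intro cINF_greatest) auto
  then have "cG + cB * w \<le> w * cS" using cSpos' by (simp add: pos_divide_le_eq)
  moreover have "w * cS = cG * w + cB * w" using cS by (simp add: algebra_simps)
  ultimately have "cG * 1 \<le> cG * w" by linarith
  then have "w \<ge> 1" using cGpos by simp
  then have loss: "\<And>j. lossless_spmf (L j)"
    using wle weight_spmf_le_1 unfolding lossless_spmf_def by (metis order.antisym order_trans)
  define Bad :: "(_ \<times> nat) set" where "Bad = {r. \<not> (fst r \<in> S \<and> P (fst r))}"
  define b where "b = (\<lambda>j. measure (measure_spmf (L j)) Bad)"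
  have brec: "\<And>j. b j = cB * b (Suc j) / cS"
  proof -
    fix j
    have "ennreal (b j) = (\<integral>\<^sup>+r. indicator Bad r \<partial>measure_spmf (L j))"
      unfolding b_def by (simp add: measure_spmf.emeasure_eq_measure[symmetric])
    also have "\<dots> = ((\<Sum>x'\<in>{x\<in>S. P x}. indicator Bad (x', Suc j)) + of_nat (card {x\<in>S. \<not> P x}) * (\<integral>\<^sup>+r. indicator Bad r \<partial>measure_spmf (L (Suc j)))) / of_nat (card S)"
      by (rule loop_rec_nn[OF rec fin])
    also have "\<dots> = (of_nat (card {x\<in>S. \<not> P x}) * ennreal (b (Suc j))) / of_nat (card S)"
    proof -
      have i1: "(\<integral>\<^sup>+r. indicator Bad r \<partial>measure_spmf (L (Suc j))) = ennreal (b (Suc j))"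
        by (simp add: b_def measure_spmf.emeasure_eq_measure)
      have s0: "(\<Sum>x'\<in>{x\<in>S. P x}. indicator Bad (x', Suc j)) = (0::ennreal)"
        by (simp add: Bad_def)
      show ?thesis by (simp only: i1 s0) simp
    qed
    also have "\<dots> = ennreal (cB * b (Suc j) / cS)"
      unfolding cB_def cS_def b_def using cSpos
      by (simp add: ennreal_of_nat_eq_real_of_nat ennreal_mult[symmetric] divide_ennreal measure_nonneg)
    finally show "b j = cB * b (Suc j) / cS" unfolding b_def cB_def cS_def
      by (subst (asm) ennreal_inj) (auto)
  qed
  define bs where "bs = (SUP j. b j)"
  have bddb: "bdd_above (range b)" unfolding b_def
    by (rule bdd_aboveI[where M=1]) (auto simp: measure_spmf.subprob_measure_le_1)
  have bge: "\<And>j. b j \<le> bs" unfolding bs_def using bddb by (simp add: cSUP_upper)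
  have "\<And>j. b j \<le> cB * bs / cS"
    using brec bge cBnn cS cGpos by (metis divide_right_mono mult_left_mono add_nonneg_nonneg less_imp_le)
  then have "bs \<le> cB * bs / cS" unfolding bs_def by (intro cSUP_least) auto
  then have "bs * cS \<le> cB * bs" using cSpos' by (simp add: pos_le_divide_eq)
  moreover have "bs * cS = cG * bs + cB * bs" using cS by (simp add: algebra_simps)
  ultimately have "cG * bs \<le> 0" by linarith
  then have "bs \<le> 0" using cGpos by (simp add: mult_le_0_iff)
  then have b0: "\<And>j. b j = 0" using bge unfolding b_def by (metis measure_nonneg order.antisym order_trans)
  have supp: "\<And>j. \<forall>r\<in>set_spmf (L j). fst r \<in> S \<and> P (fst r)"
  proof (rule ballI, rule ccontr)
    fix j r assume r: "r \<in> set_spmf (L j)" and nr: "\<not> (fst r \<in> S \<and> P (fst r))"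
    have "0 < spmf (L j) r" using r by (simp add: in_set_spmf_iff_spmf order_less_le)
    also have "spmf (L j) r = measure (measure_spmf (L j)) {r}" by (simp add: spmf_conv_measure_spmf)
    also have "\<dots> \<le> b j" unfolding b_def using nr
      by (intro measure_spmf.finite_measure_mono) (auto simp: Bad_def)
    finally show False using b0 by simp
  qed
  define K where "K = cS / cG"
  have K: "cG * K = cS" unfolding K_def using cGpos by simp
  have Knn: "K \<ge> 0" unfolding K_def using cGpos cSpos' by simp
  have trunc: "\<forall>j. (\<integral>\<^sup>+r. ennreal (real (min (snd r) (j + m))) \<partial>measure_spmf (L j)) \<le> ennreal (real j + K)" for m
  proof (induction m)
    case 0
    show ?case
    proof
      fix j
      have "(\<integral>\<^sup>+r. ennreal (real (min (snd r) (j + 0))) \<partial>measure_spmf (L j)) \<le> (\<integral>\<^sup>+r. ennreal (real j) \<partial>measure_spmf (L j))"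
        by (intro nn_integral_mono) auto
      also have "\<dots> = ennreal (real j) * ennreal (weight_spmf (L j))"
        by (simp add: measure_spmf.emeasure_eq_measure)
      also have "\<dots> = ennreal (real j)" using loss[of j] by (simp add: lossless_spmf_def)
      also have "\<dots> \<le> ennreal (real j + K)" using K cGpos cS cBnn unfolding K_def
        by (intro ennreal_leI) simp
      finally show "(\<integral>\<^sup>+r. ennreal (real (min (snd r) (j + 0))) \<partial>measure_spmf (L j)) \<le> ennreal (real j + K)" .
    qed
  next
    case (Suc m)
    show ?case
    proof
      fix j
      have "(\<integral>\<^sup>+r. ennreal (real (min (snd r) (j + Suc m))) \<partial>measure_spmf (L j)) =
        ((\<Sum>x'\<in>{x\<in>S. P x}. ennreal (real (min (Suc j) (j + Suc m)))) + of_nat (card {x\<in>S. \<not> P x}) * (\<integral>\<^sup>+r. ennreal (real (min (snd r) (j + Suc m))) \<partial>measure_spmf (L (Suc j)))) / of_nat (card S)"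
        by (subst loop_rec_nn[OF rec fin]) simp
      also have "\<dots> \<le> ((\<Sum>x'\<in>{x\<in>S. P x}. ennreal (real (Suc j))) + of_nat (card {x\<in>S. \<not> P x}) * ennreal (real (Suc j) + K)) / of_nat (card S)"
        using spec[OF Suc.IH, of "Suc j"]
        by (intro divide_right_mono_ennreal add_mono mult_left_mono) auto
      also have "\<dots> = ennreal ((cG * real (Suc j) + cB * (real (Suc j) + K)) / cS)"
      proof -
        have e1: "(\<Sum>x'\<in>{x\<in>S. P x}. ennreal (real (Suc j))) = ennreal (cG * real (Suc j))"
          unfolding cG_def by (simp add: ennreal_mult ennreal_of_nat_eq_real_of_nat del: of_nat_Suc)
        have e2: "of_nat (card {x\<in>S. \<not> P x}) * ennreal (real (Suc j) + K) = ennreal (cB * (real (Suc j) + K))"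
          using Knn unfolding cB_def by (simp add: ennreal_mult ennreal_of_nat_eq_real_of_nat del: of_nat_Suc)
        have e3: "(of_nat (card S) :: ennreal) = ennreal cS" unfolding cS_def by (simp add: ennreal_of_nat_eq_real_of_nat)
        have e4: "ennreal (cG * real (Suc j)) + ennreal (cB * (real (Suc j) + K)) = ennreal (cG * real (Suc j) + cB * (real (Suc j) + K))"
          using cGpos cBnn Knn by (intro ennreal_plus[symmetric]) auto
        show ?thesis unfolding e1 e2 e3 e4 using cGpos cBnn Knn cSpos'
          by (intro divide_ennreal) auto
      qed
      also have "(cG * real (Suc j) + cB * (real (Suc j) + K)) / cS = real j + K"
      proof -
        have "cG * real (Suc j) + cB * (real (Suc j) + K) = cS * (real j + K)"
          using K cS by (simp add: algebra_simps)
        then show ?thesis using cSpos' by simp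
      qed
      finally show "(\<integral>\<^sup>+r. ennreal (real (min (snd r) (j + Suc m))) \<partial>measure_spmf (L j)) \<le> ennreal (real j + K)" .
    qed
  qed
  have "(\<integral>\<^sup>+r. ennreal (real (snd r)) \<partial>measure_spmf (L j)) = (\<integral>\<^sup>+r. (SUP m. ennreal (real (min (snd r) (j + m)))) \<partial>measure_spmf (L j))"
  proof (intro nn_integral_cong)
    fix r :: "'a \<times> nat"
    show "ennreal (real (snd r)) = (SUP m. ennreal (real (min (snd r) (j + m))))"
    proof (rule antisym)
      show "ennreal (real (snd r)) \<le> (SUP m. ennreal (real (min (snd r) (j + m))))"
        by (rule SUP_upper2[where i="snd r"]) auto
      show "(SUP m. ennreal (real (min (snd r) (j + m)))) \<le> ennreal (real (snd r))"
        by (rule SUP_least) auto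
    qed
  qed
  also have "\<dots> = (SUP m. (\<integral>\<^sup>+r. ennreal (real (min (snd r) (j + m))) \<partial>measure_spmf (L j)))"
    by (rule nn_integral_monotone_convergence_SUP) (auto simp: incseq_def le_fun_def)
  also have "\<dots> \<le> ennreal (real j + K)"
    using trunc by (intro SUP_least) auto
  finally have "(\<integral>\<^sup>+r. ennreal (real (snd r)) \<partial>measure_spmf (L j)) \<le> ennreal (real j + K)" .
  then show ?thesis using loss supp unfolding K_def cS_def cG_def by blast
qed

definition cls :: "nat \<Rightarrow> (bool list \<Rightarrow> bool list) \<Rightarrow> bool list \<Rightarrow> nat \<Rightarrow> bool list set" where
  "cls n f y i = {x'\<in>bitstrings n. take i (f x') = take i y}"

lemma finite_bitstrings: "finite (bitstrings n)"
  unfolding bitstrings_def using finite_lists_length_eq[of "UNIV :: bool set" n] by simp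

lemma bitstrings_ne: "replicate n False \<in> bitstrings n"
  unfolding bitstrings_def by simp

lemma finite_cls: "finite (cls n f y i)"
  unfolding cls_def using finite_bitstrings by simp

lemma take_Suc_eq:
  "i < length l1 \<Longrightarrow> i < length l2 \<Longrightarrow> (take (Suc i) l1 = take (Suc i) l2) = (take i l1 = take i l2 \<and> l1 ! i = l2 ! i)"
  by (simp add: take_Suc_conv_app_nth)

lemma cls_Suc:
  assumes fB: "\<forall>x\<in>bitstrings n. f x \<in> bitstrings n" and i: "i < n" and y: "length y = n"
  shows "cls n f y (Suc i) = {x\<in>cls n f y i. f x ! i = y ! i}"
proof (rule set_eqI)
  fix x
  show "x \<in> cls n f y (Suc i) \<longleftrightarrow> x \<in> {x\<in>cls n f y i. f x ! i = y ! i}"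
  proof (cases "x \<in> bitstrings n")
    case True
    then have "length (f x) = n" using fB by (auto simp: bitstrings_def)
    then show ?thesis using True i y by (simp add: cls_def take_Suc_eq)
  next
    case False
    then show ?thesis by (simp add: cls_def)
  qed
qed

lemma comb_inner:
  assumes fB: "\<forall>x\<in>bitstrings n. f x \<in> bitstrings n" and i: "i < n" and x': "x' \<in> bitstrings n"
  shows "(\<Sum>x\<in>cls n f (f x') i. 1 / real (card (cls n f (f x) (Suc i)))) \<le> 2"
proof -
  define R where "R = cls n f (f x') i"
  define T where "T = (\<lambda>b. {x\<in>R. f x ! i = b})"
  have lx': "length (f x') = n" using fB x' by (auto simp: bitstrings_def)
  have RT: "cls n f (f x) (Suc i) = T (f x ! i)" if x: "x \<in> R" for x
  proof -
    have xB: "x \<in> bitstrings n" and tx: "take i (f x) = take i (f x')" using x by (auto simp: R_def cls_def)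
    have lx: "length (f x) = n" using fB xB by (auto simp: bitstrings_def)
    show ?thesis unfolding cls_Suc[OF fB i lx] T_def R_def using tx by (auto simp: cls_def)
  qed
  have "(\<Sum>x\<in>R. 1 / real (card (cls n f (f x) (Suc i)))) = (\<Sum>x\<in>R. if f x ! i then 1 / real (card (T True)) else 1 / real (card (T False)))"
    by (intro sum.cong refl) (simp add: RT)
  also have "\<dots> = (\<Sum>x\<in>T True. 1 / real (card (T True))) + (\<Sum>x\<in>T False. 1 / real (card (T False)))"
  proof -
    have fR: "finite R" unfolding R_def by (rule finite_cls)
    have a: "R \<inter> {x. f x ! i} = T True" and b: "R \<inter> - {x. f x ! i} = T False" unfolding T_def by auto
    show ?thesis using fR by (simp add: sum.If_cases a b)
  qed
  also have "\<dots> \<le> 1 + 1"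
    by (intro add_mono) (auto simp: divide_le_eq)
  finally show ?thesis unfolding R_def by simp
qed

lemma comb:
  assumes fB: "\<forall>x\<in>bitstrings n. f x \<in> bitstrings n" and i: "i < n"
  shows "(\<Sum>x\<in>bitstrings n. real (card (cls n f (f x) i)) / real (card (cls n f (f x) (Suc i)))) \<le> 2 * real (card (bitstrings n))"
proof -
  define B where "B = bitstrings n"
  have fin: "finite B" unfolding B_def by (rule finite_bitstrings)
  have symm: "x' \<in> cls n f (f x) i \<longleftrightarrow> x \<in> cls n f (f x') i" if "x \<in> B" "x' \<in> B" for x x'
    using that unfolding cls_def B_def by auto
  have "(\<Sum>x\<in>B. real (card (cls n f (f x) i)) / real (card (cls n f (f x) (Suc i))))
      = (\<Sum>x\<in>B. \<Sum>x'\<in>B. if x' \<in> cls n f (f x) i then 1 / real (card (cls n f (f x) (Suc i))) else 0)"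
  proof (intro sum.cong refl)
    fix x assume "x \<in> B"
    have "{x'\<in>B. x' \<in> cls n f (f x) i} = cls n f (f x) i" unfolding cls_def B_def by auto
    then have "(\<Sum>x'\<in>B. if x' \<in> cls n f (f x) i then 1 / real (card (cls n f (f x) (Suc i))) else 0)
       = (\<Sum>x'\<in>cls n f (f x) i. 1 / real (card (cls n f (f x) (Suc i))))"
      using fin sum.inter_filter[of B "\<lambda>_. 1 / real (card (cls n f (f x) (Suc i)))" "\<lambda>x'. x' \<in> cls n f (f x) i"]
      by simp
    then show "real (card (cls n f (f x) i)) / real (card (cls n f (f x) (Suc i))) =
      (\<Sum>x'\<in>B. if x' \<in> cls n f (f x) i then 1 / real (card (cls n f (f x) (Suc i))) else 0)"
      by simp
  qed
  also have "\<dots> = (\<Sum>x'\<in>B. \<Sum>x\<in>B. if x' \<in> cls n f (f x) i then 1 / real (card (cls n f (f x) (Suc i))) else 0)"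
    by (rule sum.swap)
  also have "\<dots> = (\<Sum>x'\<in>B. \<Sum>x\<in>cls n f (f x') i. 1 / real (card (cls n f (f x) (Suc i))))"
  proof (rule sum.cong[OF refl])
    fix x' assume x': "x' \<in> B"
    have "(\<Sum>x\<in>B. if x' \<in> cls n f (f x) i then 1 / real (card (cls n f (f x) (Suc i))) else 0)
        = (\<Sum>x\<in>B. if x \<in> cls n f (f x') i then 1 / real (card (cls n f (f x) (Suc i))) else 0)"
      using symm x' by (intro sum.cong refl) auto
    also have "\<dots> = (\<Sum>x\<in>cls n f (f x') i. 1 / real (card (cls n f (f x) (Suc i))))"
    proof -
      have seteq: "{x\<in>B. x \<in> cls n f (f x') i} = cls n f (f x') i" unfolding cls_def B_def by auto
      show ?thesis using sum.inter_filter[OF fin, of "\<lambda>x. 1 / real (card (cls n f (f x) (Suc i)))" "\<lambda>x. x \<in> cls n f (f x') i"] seteq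
        by simp
    qed
    finally show "(\<Sum>x\<in>B. if x' \<in> cls n f (f x) i then 1 / real (card (cls n f (f x) (Suc i))) else 0)
        = (\<Sum>x\<in>cls n f (f x') i. 1 / real (card (cls n f (f x) (Suc i))))" .
  qed
  also have "\<dots> \<le> (\<Sum>x'\<in>B. 2)"
    by (intro sum_mono comb_inner[OF fB i]) (auto simp: B_def)
  finally show ?thesis unfolding B_def by simp
qed


lemma nn_const_lossless: "lossless_spmf p \<Longrightarrow> (\<integral>\<^sup>+x. c \<partial>measure_spmf p) = c"
  by (simp add: lossless_spmf_def measure_spmf.emeasure_eq_measure)

lemma loop_rec_inst:
  assumes x: "x \<in> cls n f y k"
  shows "extend_loop f (A_star n f) x (y ! k) (Suc k) j =
    bind_spmf (spmf_of_set (cls n f y k)) (\<lambda>x'. if f x' ! k = y ! k then return_spmf (x', Suc j)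
       else extend_loop f (A_star n f) x (y ! k) (Suc k) (Suc j))"
proof -
  have eq: "{x' \<in> bitstrings n. take k (f x') = take k (f x)} = cls n f y k"
    using x by (simp add: cls_def)
  show ?thesis
    by (rule trans[OF extend_loop.simps]) (simp add: A_star_def eq)
qed

lemma inv_iter_props:
  assumes fB: "\<forall>x\<in>bitstrings n. f x \<in> bitstrings n" and x0: "x0 \<in> bitstrings n"
  shows "k \<le> n \<Longrightarrow> lossless_spmf (inv_iter n f (A_star n f) (f x0) k) \<and>
    (\<forall>r\<in>set_spmf (inv_iter n f (A_star n f) (f x0) k). fst r \<in> cls n f (f x0) k) \<and>
    (\<integral>\<^sup>+r. ennreal (real (snd r)) \<partial>measure_spmf (inv_iter n f (A_star n f) (f x0) k))
      \<le> ennreal (\<Sum>i<k. real (card (cls n f (f x0) i)) / real (card (cls n f (f x0) (Suc i))))"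
proof (induction k)
  case 0
  have c0: "cls n f (f x0) 0 = bitstrings n" by (simp add: cls_def)
  have ne: "bitstrings n \<noteq> {}" using bitstrings_ne by blast
  show ?case using finite_bitstrings[of n] ne by (simp add: c0 o_def)
next
  case (Suc k)
  define y where "y = f x0"
  define I where "I = inv_iter n f (A_star n f) y k"
  define L where "L = (\<lambda>x j. extend_loop f (A_star n f) x (y ! k) (Suc k) j)"
  define ratio where "ratio = real (card (cls n f y k)) / real (card (cls n f y (Suc k)))"
  have kn: "k < n" using Suc.prems by simp
  have IH: "lossless_spmf I \<and> (\<forall>r\<in>set_spmf I. fst r \<in> cls n f y k) \<and>
    (\<integral>\<^sup>+r. ennreal (real (snd r)) \<partial>measure_spmf I)
      \<le> ennreal (\<Sum>i<k. real (card (cls n f y i)) / real (card (cls n f y (Suc i))))"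
    using Suc.IH Suc.prems unfolding I_def y_def by simp
  have ly: "length y = n" using fB x0 by (auto simp: y_def bitstrings_def)
  have G: "{x'\<in>cls n f y k. f x' ! k = y ! k} = cls n f y (Suc k)" using cls_Suc[OF fB kn ly] by simp
  have x0c: "x0 \<in> cls n f y k" using x0 by (simp add: cls_def y_def)
  have Lprops: "lossless_spmf (L x j) \<and> (\<forall>r\<in>set_spmf (L x j). fst r \<in> cls n f y (Suc k)) \<and>
     (\<integral>\<^sup>+r. ennreal (real (snd r)) \<partial>measure_spmf (L x j)) \<le> ennreal (real j + ratio)"
    if xc: "x \<in> cls n f y k" for x j
  proof -
    have rec: "\<And>j. L x j = bind_spmf (spmf_of_set (cls n f y k)) (\<lambda>x'. if f x' ! k = y ! k then return_spmf (x', Suc j) else L x (Suc j))"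
      unfolding L_def by (rule loop_rec_inst[OF xc])
    have "f x0 ! k = y ! k" by (simp add: y_def)
    note H = loop_props[OF rec finite_cls x0c this, of j]
    have G': "\<And>z. z \<in> cls n f y (Suc k) \<longleftrightarrow> z \<in> cls n f y k \<and> f z ! k = y ! k" using G by blast
    have h1: "lossless_spmf (L x j)" using H by blast
    have h2: "\<forall>r\<in>set_spmf (L x j). fst r \<in> cls n f y (Suc k)" using H G' by blast
    have h3: "(\<integral>\<^sup>+r. ennreal (real (snd r)) \<partial>measure_spmf (L x j)) \<le> ennreal (real j + ratio)"
      using H[unfolded G] unfolding ratio_def by blast
    show ?thesis using h1 h2 h3 by blast
  qed
  have unf: "inv_iter n f (A_star n f) y (Suc k) = bind_spmf I (\<lambda>(x,c). bind_spmf (L x 0) (\<lambda>(x',j). return_spmf (x', c + j)))"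
    by (simp add: I_def L_def extend_one_def)
  have loss: "lossless_spmf (inv_iter n f (A_star n f) y (Suc k))"
    unfolding unf lossless_bind_spmf
  proof (intro conjI ballI)
    show "lossless_spmf I" using IH by simp
  next
    fix a assume a: "a \<in> set_spmf I"
    obtain x c where ac: "a = (x, c)" by (cases a)
    have "x \<in> cls n f y k" using IH a ac by auto
    then show "lossless_spmf ((\<lambda>(x,c). bind_spmf (L x 0) (\<lambda>(x',j). return_spmf (x', c + j))) a)"
      using Lprops ac by (simp add: split_beta)
  qed
  have supp: "\<forall>r\<in>set_spmf (inv_iter n f (A_star n f) y (Suc k)). fst r \<in> cls n f y (Suc k)"
  proof
    fix r assume "r \<in> set_spmf (inv_iter n f (A_star n f) y (Suc k))"
    then obtain a where a: "a \<in> set_spmf I"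
      and r: "r \<in> set_spmf ((\<lambda>(x,c). bind_spmf (L x 0) (\<lambda>(x',j). return_spmf (x', c + j))) a)"
      unfolding unf by (auto simp: set_bind_spmf)
    obtain x c where ac: "a = (x, c)" by (cases a)
    have xc: "x \<in> cls n f y k" using IH a ac by auto
    from r obtain b where b: "b \<in> set_spmf (L x 0)" and rb: "r = (fst b, c + snd b)"
      unfolding ac by (auto simp: set_bind_spmf split_beta)
    show "fst r \<in> cls n f y (Suc k)" using Lprops[OF xc, of 0] b rb by auto
  qed
  have inner: "(\<integral>\<^sup>+r. ennreal (real (snd r)) \<partial>measure_spmf ((\<lambda>(x,c). bind_spmf (L x 0) (\<lambda>(x',j). return_spmf (x', c + j))) a))
      \<le> ennreal (real (snd a)) + ennreal ratio" if a: "a \<in> set_spmf I" for a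
  proof -
    obtain x c where ac: "a = (x, c)" by (cases a)
    have xc: "x \<in> cls n f y k" using IH a ac by auto
    have "(\<integral>\<^sup>+r. ennreal (real (snd r)) \<partial>measure_spmf ((\<lambda>(x,c). bind_spmf (L x 0) (\<lambda>(x',j). return_spmf (x', c + j))) a))
       = (\<integral>\<^sup>+b. (ennreal (real c) + ennreal (real (snd b))) \<partial>measure_spmf (L x 0))"
      unfolding ac by (simp add: nn_bind nn_return split_beta ennreal_plus[symmetric] del: ennreal_plus)
    also have "\<dots> = ennreal (real c) + (\<integral>\<^sup>+b. ennreal (real (snd b)) \<partial>measure_spmf (L x 0))"
    proof -
      have "(\<integral>\<^sup>+b. (ennreal (real c) + ennreal (real (snd b))) \<partial>measure_spmf (L x 0)) =
        (\<integral>\<^sup>+b. ennreal (real c) \<partial>measure_spmf (L x 0)) + (\<integral>\<^sup>+b. ennreal (real (snd b)) \<partial>measure_spmf (L x 0))"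
        by (rule nn_integral_add) simp_all
      then show ?thesis using nn_const_lossless[of "L x 0" "ennreal (real c)"] Lprops[OF xc, of 0] by simp
    qed
    also have "\<dots> \<le> ennreal (real c) + ennreal (real 0 + ratio)"
      using Lprops[OF xc, of 0] by (intro add_left_mono) simp
    finally show ?thesis using ac by simp
  qed
  have "(\<integral>\<^sup>+r. ennreal (real (snd r)) \<partial>measure_spmf (inv_iter n f (A_star n f) y (Suc k)))
     = (\<integral>\<^sup>+a. (\<integral>\<^sup>+r. ennreal (real (snd r)) \<partial>measure_spmf ((\<lambda>(x,c). bind_spmf (L x 0) (\<lambda>(x',j). return_spmf (x', c + j))) a)) \<partial>measure_spmf I)"
    unfolding unf by (rule nn_bind)
  also have "\<dots> \<le> (\<integral>\<^sup>+a. (ennreal (real (snd a)) + ennreal ratio) \<partial>measure_spmf I)"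
    by (rule nn_integral_mono_AE) (simp add: AE_measure_spmf_iff inner)
  also have "\<dots> = (\<integral>\<^sup>+a. ennreal (real (snd a)) \<partial>measure_spmf I) + ennreal ratio"
  proof -
    have "(\<integral>\<^sup>+a. (ennreal (real (snd a)) + ennreal ratio) \<partial>measure_spmf I) =
      (\<integral>\<^sup>+a. ennreal (real (snd a)) \<partial>measure_spmf I) + (\<integral>\<^sup>+a. ennreal ratio \<partial>measure_spmf I)"
      by (rule nn_integral_add) simp_all
    then show ?thesis using nn_const_lossless[of I "ennreal ratio"] IH by simp
  qed
  also have "\<dots> \<le> ennreal (\<Sum>i<k. real (card (cls n f y i)) / real (card (cls n f y (Suc i)))) + ennreal ratio"
    using IH by (intro add_right_mono) simp
  also have "\<dots> = ennreal (\<Sum>i<Suc k. real (card (cls n f y i)) / real (card (cls n f y (Suc i))))"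
    unfolding ratio_def by (simp add: ennreal_plus[symmetric] sum_nonneg del: ennreal_plus)
  finally show ?case using loss supp unfolding y_def by simp
qed

theorem lemma4p2:
  fixes n :: nat and f :: "bool list \<Rightarrow> bool list"
  assumes "\<forall>x \<in> bitstrings n. f x \<in> bitstrings n"
  shows "lossless_spmf (inv_experiment n f) \<and>
         (\<integral>\<^sup>+ r. ennreal (real (snd r)) \<partial>measure_spmf (inv_experiment n f)) \<le> ennreal (2 * real n)"
proof -
  define B where "B = bitstrings n"
  have fin: "finite B" unfolding B_def by (rule finite_bitstrings)
  have ne: "B \<noteq> {}" unfolding B_def using bitstrings_ne by blast
  have cB: "card B > 0" using fin ne by (simp add: card_gt_0_iff)
  have md: "\<And>x y. x \<le> y \<Longrightarrow> ennreal x / of_nat (card B) \<le> ennreal y / of_nat (card B)"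
    by (intro divide_right_mono_ennreal ennreal_leI)
  define r where "r = (\<lambda>x i. real (card (cls n f (f x) i)) / real (card (cls n f (f x) (Suc i))))"
  have P: "lossless_spmf (inv_iter n f (A_star n f) (f x) n) \<and>
    (\<integral>\<^sup>+r. ennreal (real (snd r)) \<partial>measure_spmf (inv_iter n f (A_star n f) (f x) n)) \<le> ennreal (\<Sum>i<n. r x i)"
    if "x \<in> B" for x
    using inv_iter_props[OF assms that[unfolded B_def], of n] unfolding r_def by simp
  have unf: "inv_experiment n f = bind_spmf (spmf_of_set B) (\<lambda>x. inv_iter n f (A_star n f) (f x) n)"
    by (simp add: inv_experiment_def inv_alg_def B_def)
  have loss: "lossless_spmf (inv_experiment n f)"
    unfolding unf using fin ne P by simp
  have "(\<integral>\<^sup>+ r. ennreal (real (snd r)) \<partial>measure_spmf (inv_experiment n f))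
      = (\<Sum>x\<in>B. (\<integral>\<^sup>+r. ennreal (real (snd r)) \<partial>measure_spmf (inv_iter n f (A_star n f) (f x) n))) / of_nat (card B)"
    unfolding unf by (simp add: nn_bind nn_integral_spmf_of_set)
  also have "\<dots> \<le> (\<Sum>x\<in>B. ennreal (\<Sum>i<n. r x i)) / of_nat (card B)"
    using P by (intro divide_right_mono_ennreal sum_mono) auto
  also have "(\<Sum>x\<in>B. ennreal (\<Sum>i<n. r x i)) = ennreal (\<Sum>x\<in>B. \<Sum>i<n. r x i)"
    by (rule sum_ennreal) (simp add: r_def sum_nonneg)
  also have "(\<Sum>x\<in>B. \<Sum>i<n. r x i) = (\<Sum>i<n. \<Sum>x\<in>B. r x i)" by (rule sum.swap)
  also have "\<dots> \<le> (\<Sum>i<n. 2 * real (card B))"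
    by (intro sum_mono) (simp add: r_def B_def comb[OF assms])
  also have "(\<Sum>i<n. 2 * real (card B)) = (2 * real n) * real (card B)" by simp
  also have "ennreal ((2 * real n) * real (card B)) / of_nat (card B) = ennreal (2 * real n)"
  proof -
    have "(of_nat (card B) :: ennreal) = ennreal (real (card B))" by (simp add: ennreal_of_nat_eq_real_of_nat)
    then show ?thesis using cB by (simp add: divide_ennreal)
  qed
  finally have E: "(\<integral>\<^sup>+ r. ennreal (real (snd r)) \<partial>measure_spmf (inv_experiment n f)) \<le> ennreal (2 * real n)"
    using md by blast
  show ?thesis using loss E by blast
qed

end
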